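(* For any integers $r,t\ge 3$, $(K_r\times K_t)_{SR}\cong K_r\square K_t$.
   Context: $K_n$ is the complete graph on $n$ vertices. The direct product $G\times H$ has vertex set $V(G)\times V(H)$, with $(a,b)\sim(c,d)$ iff $ac\in E(G)$ and $bd\in E(H)$; the Cartesian product $G\square H$ has vertex set $V(G)\times V(H)$, with $(a,b)\sim(c,d)$ iff ($a=c$ and $bd\in E(H)$) or ($b=d$ and $ac\in E(G)$). For a connected graph $F$ with distance $d_F$, a vertex $u$ is maximally distant from $v$ if $d_F(v,w)\le d_F(u,v)$ for every neighbor $w$ of $u$; distinct $u,v$ are mutually maximally distant if each is maximally distant from the other; the boundary $\partial(F)$ is the set of vertices mutually maximally distant with some vertex; the strong resolving graph $F_{SR}$ has vertex set $\partial(F)$, two vertices adjacent iff they are mutually maximally distant in $F$. *)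

theory Defs
  imports Main
begin

text \<open>A (simple, undirected) graph is a vertex set together with an adjacency relation
  (assumed symmetric and irreflexive for the graphs we build).\<close>
type_synonym 'a graph = "'a set \<times> ('a \<Rightarrow> 'a \<Rightarrow> bool)"

definition verts :: "'a graph \<Rightarrow> 'a set" where "verts G = fst G"
definition adj :: "'a graph \<Rightarrow> 'a \<Rightarrow> 'a \<Rightarrow> bool" where "adj G = snd G"

inductive walk :: "'a graph \<Rightarrow> nat \<Rightarrow> 'a \<Rightarrow> 'a \<Rightarrow> bool" for G where
  walk0: "v \<in> verts G \<Longrightarrow> walk G 0 v v"
| walkS: "walk G n u v \<Longrightarrow> adj G v w \<Longrightarrow> w \<in> verts G \<Longrightarrow> walk G (Suc n) u w"

text \<open>Graph distance (meaningful for connected graphs): the least length of a walk.\<close>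
definition gdist :: "'a graph \<Rightarrow> 'a \<Rightarrow> 'a \<Rightarrow> nat" where
  "gdist G u v = (LEAST n. walk G n u v)"

definition connected_graph :: "'a graph \<Rightarrow> bool" where
  "connected_graph G \<longleftrightarrow> (\<forall>u\<in>verts G. \<forall>v\<in>verts G. \<exists>n. walk G n u v)"

definition max_distant :: "'a graph \<Rightarrow> 'a \<Rightarrow> 'a \<Rightarrow> bool" where
  "max_distant G u v \<longleftrightarrow>
     (\<forall>w\<in>verts G. adj G u w \<longrightarrow> gdist G v w \<le> gdist G u v)"

definition mutually_max_distant :: "'a graph \<Rightarrow> 'a \<Rightarrow> 'a \<Rightarrow> bool" where
  "mutually_max_distant G u v \<longleftrightarrow>
     u \<in> verts G \<and> v \<in> verts G \<and> u \<noteq> v \<and> max_distant G u v \<and> max_distant G v u"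

definition boundary :: "'a graph \<Rightarrow> 'a set" where
  "boundary G = {u \<in> verts G. \<exists>v. mutually_max_distant G u v}"

definition strong_resolving_graph :: "'a graph \<Rightarrow> 'a graph" where
  "strong_resolving_graph G = (boundary G, mutually_max_distant G)"

definition complete_graph :: "nat \<Rightarrow> nat graph" where
  "complete_graph n = ({0..<n}, \<lambda>x y. x \<noteq> y)"

definition direct_product :: "'a graph \<Rightarrow> 'b graph \<Rightarrow> ('a \<times> 'b) graph" where
  "direct_product G H = (verts G \<times> verts H,
     \<lambda>(a, b) (c, d). adj G a c \<and> adj H b d)"

definition cartesian_product :: "'a graph \<Rightarrow> 'b graph \<Rightarrow> ('a \<times> 'b) graph" where
  "cartesian_product G H = (verts G \<times> verts H,
     \<lambda>(a, b) (c, d). (a = c \<and> adj H b d) \<or> (b = d \<and> adj G a c))"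

definition graph_iso :: "'a graph \<Rightarrow> 'b graph \<Rightarrow> bool" where
  "graph_iso G H \<longleftrightarrow> (\<exists>f. bij_betw f (verts G) (verts H) \<and>
     (\<forall>x\<in>verts G. \<forall>y\<in>verts G. adj G x y \<longleftrightarrow> adj H (f x) (f y)))"

end

theory Submission
  imports Defs
begin

lemma walk0_eq': "walk G n u v \<Longrightarrow> n = 0 \<Longrightarrow> u = v"
  by (induction rule: walk.induct) simp_all

lemma walk0_eq: "walk G 0 u v \<Longrightarrow> u = v"
  by (erule walk0_eq') simp

lemma walk1_adj': "walk G n u v \<Longrightarrow> n = Suc 0 \<Longrightarrow> adj G u v"
  by (induction rule: walk.induct) (simp, metis Suc_inject walk0_eq)

lemma walk1_adj: "walk G (Suc 0) u v \<Longrightarrow> adj G u v"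
  by (erule walk1_adj') simp

lemma gdist_le: "walk G n u v \<Longrightarrow> gdist G u v \<le> n"
  unfolding gdist_def by (rule Least_le)

lemma gdist_ge2:
  assumes "walk G n u v" "u \<noteq> v" "\<not> adj G u v"
  shows "gdist G u v \<ge> 2"
proof -
  have w: "walk G (gdist G u v) u v" unfolding gdist_def by (rule LeastI, rule assms(1))
  have "gdist G u v \<noteq> 0" using w walk0_eq assms(2) by metis
  moreover have "gdist G u v \<noteq> Suc 0" using w walk1_adj assms(3) by fastforce
  ultimately show ?thesis by linarith
qed

lemma gdist_1:
  assumes "adj G u v" "u \<in> verts G" "v \<in> verts G" "u \<noteq> v"
  shows "gdist G u v = 1"
proof -
  have w: "walk G (Suc 0) u v" using assms by (meson walk0 walkS)
  have "gdist G u v \<le> 1" using gdist_le[OF w] by simp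
  moreover have "gdist G u v \<noteq> 0"
  proof
    assume "gdist G u v = 0"
    moreover have "walk G (gdist G u v) u v" unfolding gdist_def by (rule LeastI, rule w)
    ultimately show False using walk0_eq assms(4) by fastforce
  qed
  ultimately show ?thesis by linarith
qed

lemma other3: "(r::nat) \<ge> 3 \<Longrightarrow> \<exists>x<r. x \<noteq> a \<and> x \<noteq> c" by presburger

theorem lemma32:
  fixes r t :: nat
  assumes "r \<ge> 3" and "t \<ge> 3"
  shows "graph_iso
           (strong_resolving_graph (direct_product (complete_graph r) (complete_graph t)))
           (cartesian_product (complete_graph r) (complete_graph t))"
proof -
  define G where "G = direct_product (complete_graph r) (complete_graph t)"
  have V: "verts G = {0..<r} \<times> {0..<t}"
    unfolding G_def direct_product_def complete_graph_def verts_def by simp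
  have A: "adj G (a,b) (c,d) \<longleftrightarrow> a \<noteq> c \<and> b \<noteq> d" for a b c d
    unfolding G_def direct_product_def complete_graph_def verts_def adj_def by simp
  have W2: "walk G 2 u v" if "u \<in> verts G" "v \<in> verts G" for u v
  proof -
    obtain a b c d where u: "u = (a,b)" and v: "v = (c,d)" by fastforce
    obtain x where x: "x < r" "x \<noteq> a" "x \<noteq> c" using other3[OF assms(1)] by blast
    obtain y where y: "y < t" "y \<noteq> b" "y \<noteq> d" using other3[OF assms(2)] by blast
    have xy: "(x,y) \<in> verts G" using x y V by auto
    have "walk G 0 u u" using that(1) by (rule walk0)
    moreover have "adj G u (x,y)" using x y u A by simp
    ultimately have "walk G (Suc 0) u (x,y)" using xy by (rule walkS)
    moreover have "adj G (x,y) v" using x y v A by simp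
    ultimately have "walk G (Suc (Suc 0)) u v" using that(2) by (rule walkS)
    then show ?thesis by (simp add: numeral_2_eq_2)
  qed
  have Dle: "gdist G u v \<le> 2" if "u \<in> verts G" "v \<in> verts G" for u v
    using gdist_le[OF W2[OF that]] .
  have D2: "gdist G u v = 2" if "u \<in> verts G" "v \<in> verts G" "u \<noteq> v" "\<not> adj G u v" for u v
    using gdist_ge2[OF W2[OF that(1,2)] that(3,4)] Dle[OF that(1,2)] by linarith
  have MMD: "mutually_max_distant G (a,b) (c,d) \<longleftrightarrow> (a = c \<and> b \<noteq> d) \<or> (b = d \<and> a \<noteq> c)"
    if "(a,b) \<in> verts G" "(c,d) \<in> verts G" for a b c d
  proof (cases "a \<noteq> c \<and> b \<noteq> d")
    case True
    obtain y where y: "y < t" "y \<noteq> b" "y \<noteq> d" using other3[OF assms(2)] by blast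
    have cy: "(c,y) \<in> verts G" using that y V by auto
    have "gdist G (a,b) (c,d) = 1" using gdist_1[of G "(a,b)" "(c,d)"] True A[of a b c d] that by auto
    moreover have "gdist G (c,d) (c,y) = 2" using D2[OF that(2) cy] y A by auto
    moreover have "adj G (a,b) (c,y)" using A True y by auto
    ultimately have "\<not> max_distant G (a,b) (c,d)" using cy unfolding max_distant_def by force
    then show ?thesis unfolding mutually_max_distant_def using True by auto
  next
    case False
    show ?thesis
    proof (cases "(a,b) = (c,d)")
      case True then show ?thesis unfolding mutually_max_distant_def by auto
    next
      case ne: False
      have na: "\<not> adj G (a,b) (c,d)" "\<not> adj G (c,d) (a,b)" using A False by auto
      have "gdist G (a,b) (c,d) = 2" "gdist G (c,d) (a,b) = 2"
        using D2 that ne na by auto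
      then have "max_distant G (a,b) (c,d)" "max_distant G (c,d) (a,b)"
        using Dle that unfolding max_distant_def by auto
      then show ?thesis unfolding mutually_max_distant_def using that ne False by auto
    qed
  qed
  have B: "boundary G = verts G"
  proof
    show "boundary G \<subseteq> verts G" unfolding boundary_def by auto
  next
    show "verts G \<subseteq> boundary G"
    proof
      fix u assume u: "u \<in> verts G"
      obtain a b where ab: "u = (a,b)" by fastforce
      obtain y where y: "y < t" "y \<noteq> b" using other3[OF assms(2)] by blast
      have ay: "(a,y) \<in> verts G" using u ab y V by auto
      have "mutually_max_distant G (a,b) (a,y)" using MMD[of a b a y] u ab ay y by auto
      then show "u \<in> boundary G" unfolding boundary_def using u ab by auto
    qed
  qed
  have CV: "verts (cartesian_product (complete_graph r) (complete_graph t)) = verts G"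
    unfolding V cartesian_product_def complete_graph_def by (simp add: verts_def)
  have CA: "adj (cartesian_product (complete_graph r) (complete_graph t)) (a,b) (c,d)
      \<longleftrightarrow> (a = c \<and> b \<noteq> d) \<or> (b = d \<and> a \<noteq> c)" for a b c d
    unfolding cartesian_product_def complete_graph_def adj_def by auto
  show ?thesis
    unfolding graph_iso_def G_def[symmetric]
  proof (intro exI[of _ id] conjI ballI)
    show "bij_betw id (verts (strong_resolving_graph G))
        (verts (cartesian_product (complete_graph r) (complete_graph t)))"
    proof -
      have "verts (strong_resolving_graph G) = boundary G"
        by (simp add: strong_resolving_graph_def verts_def)
      then show ?thesis unfolding CV B by simp
    qed
  next
    fix x y assume "x \<in> verts (strong_resolving_graph G)" "y \<in> verts (strong_resolving_graph G)"
    then have xy: "x \<in> verts G" "y \<in> verts G" using B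
      unfolding strong_resolving_graph_def by (simp_all add: verts_def)
    obtain a b c d where x: "x = (a,b)" and y: "y = (c,d)" by fastforce
    show "adj (strong_resolving_graph G) x y \<longleftrightarrow>
        adj (cartesian_product (complete_graph r) (complete_graph t)) (id x) (id y)"
    proof -
      have e: "adj (strong_resolving_graph G) x y = mutually_max_distant G x y"
        by (simp add: strong_resolving_graph_def adj_def)
      have m: "mutually_max_distant G (a,b) (c,d) \<longleftrightarrow> (a = c \<and> b \<noteq> d) \<or> (b = d \<and> a \<noteq> c)"
        using MMD xy x y by blast
      show ?thesis unfolding e id_apply unfolding x y m CA ..
    qed
  qed
qed

end
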